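(* Let $A\subset\mathbb{R}$ be a finite convex set and $B\subset\mathbb{R}$ any finite set. Then, for either choice of sign, \[ E_3(A,B):=\sum_x r_{A\pm B}^3(x)\ll |A||B|^2\log|A|, \] and for every $1<p<2$, \[ E_{1+p}(A,B):=\sum_x r_{A\pm B}^{1+p}(x)\ll |A||B|^{1+p/2}, \] where the implied constant may depend on $p$.
   Context: A finite set $A=\{a_1<\dots<a_N\}\subset\mathbb{R}$ is convex if the gaps $a_{i+1}-a_i$ form a strictly monotone sequence. $r_{A\pm B}(x)$ is the number of pairs $(a,b)\in A\times B$ with $a\pm b=x$. *)

theory Defs
  imports Complex_Main
begin

definition convex_set :: "real set \<Rightarrow> bool" where
  "convex_set A \<longleftrightarrow> finite A \<and>
     (let xs = sorted_list_of_set A; N = length xs;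
          d = (\<lambda>i. xs ! Suc i - xs ! i)
      in (\<forall>i j. i < j \<and> Suc j < N \<longrightarrow> d i < d j) \<or>
         (\<forall>i j. i < j \<and> Suc j < N \<longrightarrow> d i > d j))"

definition r_plus :: "real set \<Rightarrow> real set \<Rightarrow> real \<Rightarrow> nat" where
  "r_plus A B x = card {(a, b). a \<in> A \<and> b \<in> B \<and> a + b = x}"

definition r_minus :: "real set \<Rightarrow> real set \<Rightarrow> real \<Rightarrow> nat" where
  "r_minus A B x = card {(a, b). a \<in> A \<and> b \<in> B \<and> a - b = x}"

text \<open>Additive energies E_q over all x (only x in the sum/difference set contribute).\<close>
definition E_plus :: "real \<Rightarrow> real set \<Rightarrow> real set \<Rightarrow> real" where
  "E_plus q A B = (\<Sum>x \<in> (\<lambda>(a, b). a + b) ` (A \<times> B). real (r_plus A B x) powr q)"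

definition E_minus :: "real \<Rightarrow> real set \<Rightarrow> real set \<Rightarrow> real" where
  "E_minus q A B = (\<Sum>x \<in> (\<lambda>(a, b). a - b) ` (A \<times> B). real (r_minus A B x) powr q)"

end

theory Submission
  imports Defs
begin

lemma layer_cake:
  fixes r :: "'a \<Rightarrow> nat"
  assumes "finite D" "\<And>x. x \<in> D \<Longrightarrow> r x \<le> R" "q > 0"
  shows "(\<Sum>x\<in>D. real (r x) powr q) =
    (\<Sum>s\<in>{1..R}. (real s powr q - real (s - 1) powr q) * real (card {x\<in>D. s \<le> r x}))"
proof -
  define w where "w s = real s powr q - real (s - 1) powr q" for s
  have 1: "real (r x) powr q = (\<Sum>s\<in>{1..R}. if s \<le> r x then w s else 0)" if "x \<in> D" for x
  proof -
    have "(\<Sum>s\<in>{1..R}. if s \<le> r x then w s else 0) = (\<Sum>s\<in>{s\<in>{1..R}. s \<le> r x}. w s)"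
      by (rule sum.inter_filter[symmetric]) simp
    also have "{s\<in>{1..R}. s \<le> r x} = {Suc 0..r x}" using assms(2)[OF that] by auto
    also have "(\<Sum>s\<in>{Suc 0..r x}. w s) = real (r x) powr q - real 0 powr q"
      unfolding w_def by (rule sum_telescope'') simp
    finally show ?thesis by simp
  qed
  have "(\<Sum>x\<in>D. real (r x) powr q) = (\<Sum>x\<in>D. \<Sum>s\<in>{1..R}. if s \<le> r x then w s else 0)"
    using 1 by (rule sum.cong[OF refl])
  also have "\<dots> = (\<Sum>s\<in>{1..R}. \<Sum>x\<in>D. if s \<le> r x then w s else 0)" by (rule sum.swap)
  also have "\<dots> = (\<Sum>s\<in>{1..R}. w s * real (card {x\<in>D. s \<le> r x}))"
  proof (rule sum.cong[OF refl])
    fix s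
    have "(\<Sum>x\<in>D. if s \<le> r x then w s else 0) = (\<Sum>x\<in>{x\<in>D. s \<le> r x}. w s)"
      using assms(1) by (rule sum.inter_filter[symmetric])
    then show "(\<Sum>x\<in>D. if s \<le> r x then w s else 0) = w s * real (card {x\<in>D. s \<le> r x})"
      by simp
  qed
  finally show ?thesis unfolding w_def .
qed

lemma pw_bound:
  fixes q :: real
  assumes "1 \<le> q" "1 \<le> s"
  shows "real s powr q - real (s - 1) powr q \<le> q * real s powr (q - 1)"
proof (cases "s = 1")
  case True then show ?thesis using assms by simp
next
  case False
  then have s2: "real s - 1 \<ge> 1" using assms by auto
  have "\<exists>z>real s - 1. z < real s \<and> real s powr q - (real s - 1) powr q = (real s - (real s - 1)) * (q * z powr (q - 1))"
    using s2 by (intro MVT2) (auto intro!: derivative_eq_intros)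
  then obtain z where z: "z > real s - 1" "z < real s"
    "real s powr q - (real s - 1) powr q = q * z powr (q - 1)" by auto
  have "z powr (q - 1) \<le> real s powr (q - 1)" using z s2 assms by (intro powr_mono2) auto
  then show ?thesis using z assms by (simp add: of_nat_diff)
qed

lemma tail_bound:
  fixes a y :: real
  assumes "a > 0" "y \<ge> 1"
  shows "a * (y + 1) powr (- a - 1) \<le> y powr (- a) - (y + 1) powr (- a)"
proof -
  have "\<exists>z>y. z < y + 1 \<and> (y + 1) powr (- a) - y powr (- a) = (y + 1 - y) * (- a * z powr (- a - 1))"
    using assms by (intro MVT2) (auto intro!: derivative_eq_intros)
  then obtain z where z: "z > y" "z < y + 1"
    "(y + 1) powr (- a) - y powr (- a) = - a * z powr (- a - 1)" by auto
  have "(y + 1) powr (- a - 1) \<le> z powr (- a - 1)" using z assms by (intro powr_mono2') auto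
  then have "a * (y + 1) powr (- a - 1) \<le> a * z powr (- a - 1)" using assms by (intro mult_left_mono) auto
  then show ?thesis using z by linarith
qed

lemma harm_bound:
  "(\<Sum>s\<in>{1..n}. 1 / real s) \<le> 1 + ln (real n)"
proof (induction n)
  case 0 then show ?case by simp
next
  case (Suc n)
  show ?case
  proof (cases "n = 0")
    case True then show ?thesis by simp
  next
    case False
    have "ln (real n / real (Suc n)) \<le> real n / real (Suc n) - 1"
      by (rule ln_le_minus_one) (use False in auto)
    then have "1 / real (Suc n) \<le> ln (real (Suc n)) - ln (real n)"
      using False by (simp add: ln_div field_simps)
    then show ?thesis using Suc by (simp add: sum.atLeast_Suc_atMost_Suc_shift del: of_nat_Suc) 
  qed
qed

lemma gap_sum_list:
  fixes xs :: "real list"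
  shows "i + k < length xs \<Longrightarrow> xs!(i+k) - xs!i = (\<Sum>s<k. xs!(Suc (i+s)) - xs!(i+s))"
proof (induction k)
  case 0 then show ?case by simp
next
  case (Suc k)
  then have "xs!(i+k) - xs!i = (\<Sum>s<k. xs!(Suc (i+s)) - xs!(i+s))" by simp
  then show ?case by simp
qed

lemma convex_inj:
  assumes cA: "convex_set A" and k: "0 < k" and i: "i + k < card A" and i': "i' + k < card A"
    and eq: "sorted_list_of_set A ! (i+k) - sorted_list_of_set A ! i
           = sorted_list_of_set A ! (i'+k) - sorted_list_of_set A ! i'"
  shows "i = i'"
proof -
  define xs where "xs = sorted_list_of_set A"
  define d where "d = (\<lambda>i. xs ! Suc i - xs ! i)"
  have fA: "finite A" using cA unfolding convex_set_def by simp
  have N: "length xs = card A" unfolding xs_def using fA by simp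
  have mono: "(\<forall>i j. i < j \<and> Suc j < length xs \<longrightarrow> d i < d j) \<or>
         (\<forall>i j. i < j \<and> Suc j < length xs \<longrightarrow> d i > d j)"
    using cA unfolding convex_set_def xs_def d_def Let_def by simp
  define S where "S = (\<lambda>i. \<Sum>s<k. d (i + s))"
  have Seq: "xs!(i+k) - xs!i = S i" if "i + k < length xs" for i
    using gap_sum_list[OF that] unfolding S_def d_def by simp
  have key: "S i1 \<noteq> S i2" if "i1 < i2" "i2 + k < length xs" for i1 i2
  proof -
    have ne: "{..<k} \<noteq> {}" using k by auto
    from mono show ?thesis
    proof
      assume inc: "\<forall>i j. i < j \<and> Suc j < length xs \<longrightarrow> d i < d j"
      have "S i1 < S i2" unfolding S_def
        by (rule sum_strict_mono[OF _ ne]) (use inc that in auto)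
      then show ?thesis by simp
    next
      assume dec: "\<forall>i j. i < j \<and> Suc j < length xs \<longrightarrow> d i > d j"
      have "S i2 < S i1" unfolding S_def
        by (rule sum_strict_mono[OF _ ne]) (use dec that in auto)
      then show ?thesis by simp
    qed
  qed
  have "S i = S i'" using eq Seq[of i] Seq[of i'] i i' N unfolding xs_def by simp
  then have "\<not> i < i'" "\<not> i' < i" using key[of i i'] key[of i' i] i i' N by auto
  then show ?thesis by simp
qed

lemma gaps_sum:
  fixes f :: "nat \<Rightarrow> 'a::linorder"
  assumes fS: "finite S" and mono: "\<And>i j. i < j \<Longrightarrow> j < t \<Longrightarrow> f i < f j"
  shows "(\<Sum>j<t - 1. card {s\<in>S. f j < s \<and> s \<le> f (Suc j)}) \<le> card S"
proof -
  define T where "T j = {s\<in>S. f j < s \<and> s \<le> f (Suc j)}" for j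
  have fT: "finite (T j)" for j unfolding T_def using fS by simp
  have le: "f (Suc i) \<le> f j" if "i < j" "j < t" for i j
    using mono[of "Suc i" j] that by (cases "Suc i = j") auto
  have disj: "T i \<inter> T j = {}" if "i \<in> {..<t-1}" "j \<in> {..<t-1}" "i \<noteq> j" for i j
  proof (cases "i < j")
    case True
    then have "f (Suc i) \<le> f j" using le that by auto
    then show ?thesis unfolding T_def by auto
  next
    case False
    then have "j < i" using that by auto
    then have "f (Suc j) \<le> f i" using le that by auto
    then show ?thesis unfolding T_def by auto
  qed
  have "(\<Sum>j<t - 1. card (T j)) = card (\<Union>j<t-1. T j)"
    by (rule card_UN_disjoint[symmetric]) (use fT disj in auto)
  also have "\<dots> \<le> card S" by (rule card_mono[OF fS]) (auto simp: T_def)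
  finally show ?thesis unfolding T_def .
qed

lemma r_minus_idx:
  assumes fA: "finite A" and fB: "finite B"
  shows "r_minus A B x = card {i. i < card A \<and> sorted_list_of_set A ! i - x \<in> B}"
proof -
  define xs where "xs = sorted_list_of_set A"
  have N: "length xs = card A" "set xs = A" "distinct xs" unfolding xs_def using fA by auto
  have "r_minus A B x = card (fst ` {(a, b). a \<in> A \<and> b \<in> B \<and> a - b = x})"
    unfolding r_minus_def by (rule card_image[symmetric]) (auto simp: inj_on_def)
  also have "fst ` {(a, b). a \<in> A \<and> b \<in> B \<and> a - b = x} = {a\<in>A. a - x \<in> B}"
  proof (rule set_eqI)
    fix a show "a \<in> fst ` {(a, b). a \<in> A \<and> b \<in> B \<and> a - b = x} \<longleftrightarrow> a \<in> {a\<in>A. a - x \<in> B}"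
    proof
      assume "a \<in> fst ` {(a, b). a \<in> A \<and> b \<in> B \<and> a - b = x}"
      then obtain b where "a \<in> A" "b \<in> B" "a - b = x" by auto
      then show "a \<in> {a\<in>A. a - x \<in> B}" by (simp add: algebra_simps)
    next
      assume "a \<in> {a\<in>A. a - x \<in> B}"
      then have "(a, a - x) \<in> {(a, b). a \<in> A \<and> b \<in> B \<and> a - b = x}" by simp
      then show "a \<in> fst ` {(a, b). a \<in> A \<and> b \<in> B \<and> a - b = x}" by force
    qed
  qed
  also have "{a\<in>A. a - x \<in> B} = (\<lambda>i. xs!i) ` {i. i < card A \<and> xs ! i - x \<in> B}"
  proof (rule set_eqI)
    fix a show "a \<in> {a\<in>A. a - x \<in> B} \<longleftrightarrow> a \<in> (\<lambda>i. xs!i) ` {i. i < card A \<and> xs ! i - x \<in> B}"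
    proof
      assume "a \<in> {a\<in>A. a - x \<in> B}"
      then obtain i where "i < card A" "xs ! i = a" "a - x \<in> B" using N by (auto simp: in_set_conv_nth)
      then show "a \<in> (\<lambda>i. xs!i) ` {i. i < card A \<and> xs ! i - x \<in> B}" by auto
    next
      assume "a \<in> (\<lambda>i. xs!i) ` {i. i < card A \<and> xs ! i - x \<in> B}"
      then obtain i where "i < card A" "xs ! i = a" "a - x \<in> B" by auto
      then show "a \<in> {a\<in>A. a - x \<in> B}" using N nth_mem[of i xs] by auto
    qed
  qed
  also have "card \<dots> = card {i. i < card A \<and> xs ! i - x \<in> B}"
    by (rule card_image) (use N in \<open>auto simp: inj_on_def nth_eq_iff_index_eq\<close>)
  finally show ?thesis unfolding xs_def .
qed

lemma level_bound_big:
  assumes cA: "convex_set A" and fB: "finite B" and t4: "4 \<le> \<tau>"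
  shows "real (card {x. \<tau> \<le> real (r_minus A B x)}) * \<tau>^3 \<le> 64 * card A * (card B)^2"
proof -
  have fA: "finite A" using cA unfolding convex_set_def by simp
  define xs where "xs = sorted_list_of_set A"
  define n where "n = card A"
  define m where "m = card B"
  have N: "length xs = n" "set xs = A" "distinct xs" unfolding xs_def n_def using fA by auto
  have xs_strict: "xs ! i < xs ! j" if "i < j" "j < n" for i j
    using sorted_wrt_nth_less[OF strict_sorted_list_of_set[of A] that(1)] that N(1)
    unfolding xs_def by simp
  define X where "X = {x. \<tau> \<le> real (r_minus A B x)}"
  define I where "I x = {i. i < n \<and> xs ! i - x \<in> B}" for x
  have rI: "r_minus A B x = card (I x)" for x
    unfolding I_def n_def xs_def using r_minus_idx[OF fA fB] .
  have fI: "finite (I x)" for x unfolding I_def by simp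
  have XD: "X \<subseteq> (\<lambda>(i,b). xs ! i - b) ` ({..<n} \<times> B)"
  proof
    fix x assume "x \<in> X"
    then have "4 \<le> real (card (I x))" using t4 rI unfolding X_def by force
    then have "I x \<noteq> {}" by auto
    then obtain i where "i \<in> I x" by blast
    then have "(i, xs ! i - x) \<in> {..<n} \<times> B" unfolding I_def by auto
    moreover have "x = (\<lambda>(i,b). xs ! i - b) (i, xs ! i - x)" by simp
    ultimately show "x \<in> (\<lambda>(i,b). xs ! i - b) ` ({..<n} \<times> B)" by (rule rev_image_eqI)
  qed
  have fX: "finite X" by (rule finite_subset[OF XD]) (use fB in auto)
  show ?thesis
  proof (cases "X = {}")
    case True then show ?thesis unfolding X_def by simp
  next
    case False
    then obtain x0 where "x0 \<in> X" by auto
    then have "\<tau> \<le> real (card (I x0))" using rI unfolding X_def by simp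
    moreover have "card (I x0) \<le> n" unfolding I_def by (rule order.trans[OF card_mono[of "{..<n}"]]) auto
    ultimately have npos: "real n \<ge> \<tau>" by linarith

    from \<open>x0 \<in> X\<close> have "I x0 \<noteq> {}" using t4 rI unfolding X_def by force
    then obtain i0 where "i0 \<in> I x0" by blast
    then have "B \<noteq> {}" unfolding I_def by auto
    then have mpos: "real m \<ge> 1" unfolding m_def using fB by (simp add: Suc_leI card_gt_0_iff)
    have tpos: "\<tau> > 0" using t4 by simp
    define K where "K = 4 * real n / \<tau>"
    define L where "L = 4 * real m / \<tau>"
    have Kpos: "K > 0" "L > 0" unfolding K_def L_def using tpos npos mpos by auto
    define Gx where "Gx x = {(i,k,l). i < n \<and> i + k < n \<and> xs!i - x \<in> B \<and> xs!(i+k) - x \<in> B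
       \<and> 1 \<le> k \<and> real k \<le> K \<and> l = card {b\<in>B. xs!i - x < b \<and> b \<le> xs!(i+k) - x}
       \<and> 1 \<le> l \<and> real l \<le> L}" for x
    define G where "G = Sigma X Gx"
    have fGx: "finite (Gx x)" for x
    proof (rule finite_subset[of _ "{..<n} \<times> {..<n} \<times> {..m}"])
      show "Gx x \<subseteq> {..<n} \<times> {..<n} \<times> {..m}"
      proof
        fix z assume "z \<in> Gx x"
        then obtain i k l where z: "z = (i,k,l)" "i < n" "i + k < n"
          "l = card {b\<in>B. xs!i - x < b \<and> b \<le> xs!(i+k) - x}" unfolding Gx_def by auto
        have "l \<le> m" unfolding z(4) m_def by (rule card_mono[OF fB]) auto
        then show "z \<in> {..<n} \<times> {..<n} \<times> {..m}" using z by auto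
      qed
    qed auto
    have cardG: "card G = (\<Sum>x\<in>X. card (Gx x))"
      unfolding G_def by (rule card_SigmaI) (use fX fGx in auto)
    define Kn where "Kn = nat \<lfloor>K\<rfloor>"
    define Ln where "Ln = nat \<lfloor>L\<rfloor>"
    define f where "f = (\<lambda>(x::real, i::nat, k::nat, l::nat). (xs!i - x, k, l))"
    have cint: "card {b\<in>B. c < b \<and> b \<le> c1} < card {b\<in>B. c < b \<and> b \<le> c2}"
      if "c2 \<in> B" "c < c2" "c1 < c2" for c c1 c2
    proof -
      have sub: "{b\<in>B. c < b \<and> b \<le> c1} \<subseteq> {b\<in>B. c < b \<and> b \<le> c2}" using that(3) by force
      have "c2 \<in> {b\<in>B. c < b \<and> b \<le> c2}" using that by simp
      moreover have "c2 \<notin> {b\<in>B. c < b \<and> b \<le> c1}" using that(3) by simp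
      ultimately have "{b\<in>B. c < b \<and> b \<le> c1} \<subset> {b\<in>B. c < b \<and> b \<le> c2}" using sub by blast
      moreover have "finite {b\<in>B. c < b \<and> b \<le> c2}" using fB by simp
      ultimately show ?thesis by (intro psubset_card_mono)
    qed
    have injf: "inj_on f G"
    proof (rule inj_onI)
      fix u v assume u: "u \<in> G" and v: "v \<in> G" and fuv: "f u = f v"
      obtain x i k l where u': "u = (x,i,k,l)" by (cases u) auto
      obtain x' i' k' l' where v': "v = (x',i',k',l')" by (cases v) auto
      from u have gu: "i < n" "i + k < n" "xs!i - x \<in> B" "xs!(i+k) - x \<in> B" "1 \<le> k"
        "l = card {b\<in>B. xs!i - x < b \<and> b \<le> xs!(i+k) - x}"
        unfolding u' G_def Gx_def by auto
      from v have gv: "i' < n" "i' + k' < n" "xs!i' - x' \<in> B" "xs!(i'+k') - x' \<in> B" "1 \<le> k'"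
        "l' = card {b\<in>B. xs!i' - x' < b \<and> b \<le> xs!(i'+k') - x'}"
        unfolding v' G_def Gx_def by auto
      from fuv have e: "xs!i - x = xs!i' - x'" "k = k'" "l = l'" unfolding u' v' f_def by auto
      define c where "c = xs!i - x"
      define c1 where "c1 = xs!(i+k) - x"
      define c2 where "c2 = xs!(i'+k) - x'"
      have cc1: "c < c1" unfolding c_def c1_def using xs_strict[of i "i+k"] gu by auto
      have cc2: "c < c2" unfolding c_def c2_def using xs_strict[of i' "i'+k"] gv e by auto
      have ceq: "card {b\<in>B. c < b \<and> b \<le> c1} = card {b\<in>B. c < b \<and> b \<le> c2}"
        using gu(6) gv(6) e unfolding c_def c1_def c2_def by simp
      have "c1 = c2"
      proof (rule ccontr)
        assume "c1 \<noteq> c2"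
        then consider "c1 < c2" | "c2 < c1" by linarith
        then show False
        proof cases
          case 1 then show False using cint[of c2 c c1] ceq gv(4) e cc2 unfolding c2_def by simp
        next
          case 2 then show False using cint[of c1 c c2] ceq gu(4) cc1 unfolding c1_def by simp
        qed
      qed
      then have "xs!(i+k) - xs!i = xs!(i'+k) - xs!i'" using e unfolding c_def c1_def c2_def by linarith
      moreover have "0 < k" "i + k < card A" "i' + k < card A" using gu gv e unfolding n_def by auto
      ultimately have "i = i'" using convex_inj[OF cA, of k i i'] unfolding xs_def by blast
      then show "u = v" using e unfolding u' v' by auto
    qed
    have imf: "f ` G \<subseteq> B \<times> {1..Kn} \<times> {1..Ln}"
    proof
      fix z assume "z \<in> f ` G"
      then obtain x i k l where "(x,i,k,l) \<in> G" "z = (xs!i - x, k, l)" unfolding f_def by auto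
      then have g: "xs!i - x \<in> B" "1 \<le> k" "real k \<le> K" "1 \<le> l" "real l \<le> L" and z: "z = (xs!i - x, k, l)"
        unfolding G_def Gx_def by auto
      have "k \<le> Kn" unfolding Kn_def using g(3) by (simp add: le_nat_floor)
      moreover have "l \<le> Ln" unfolding Ln_def using g(5) by (simp add: le_nat_floor)
      ultimately show "z \<in> B \<times> {1..Kn} \<times> {1..Ln}" using g z by auto
    qed
    have "card G \<le> card (B \<times> {1..Kn} \<times> {1..Ln})"
      by (rule card_inj_on_le[OF injf imf]) (use fB in auto)
    also have "\<dots> = m * Kn * Ln" unfolding m_def by (simp add: card_cartesian_product)
    finally have "real (card G) \<le> real m * real Kn * real Ln" by (simp flip: of_nat_mult)
    also have "\<dots> \<le> real m * K * L"
    proof -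
      have "real Kn \<le> K" "real Ln \<le> L" unfolding Kn_def Ln_def using Kpos by auto
      then show ?thesis using Kpos mpos by (intro mult_mono) auto
    qed
    finally have upper: "real (card G) \<le> real m * K * L" .
    have lower: "\<tau> / 4 \<le> real (card (Gx x))" if "x \<in> X" for x
    proof -
      define js where "js = sorted_list_of_set (I x)"
      define t where "t = length js"
      have js_set: "set js = I x" and tI: "t = card (I x)" unfolding js_def t_def using fI by auto
      have tt: "\<tau> \<le> real t" using that rI tI unfolding X_def by simp
      have js_in: "js ! j \<in> I x" if "j < t" for j using nth_mem[of j js] that js_set unfolding t_def by auto
      have js_lt: "js ! j < n" "xs ! (js ! j) - x \<in> B" if "j < t" for j using js_in[OF that] unfolding I_def by auto
      have js_strict: "js ! i < js ! j" if "i < j" "j < t" for i j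
        using sorted_wrt_nth_less[OF strict_sorted_list_of_set[of "I x"] that(1)] that
        unfolding js_def t_def by simp
      define c where "c j = xs ! (js ! j) - x" for j
      have c_strict: "c i < c j" if "i < j" "j < t" for i j
      proof -
        have "xs ! (js ! i) < xs ! (js ! j)" by (rule xs_strict[OF js_strict[OF that] js_lt(1)[OF that(2)]])
        then show ?thesis unfolding c_def by simp
      qed
      define kk where "kk j = js ! Suc j - js ! j" for j
      define ll where "ll j = card {b\<in>B. c j < b \<and> b \<le> c (Suc j)}" for j
      define J where "J = {..<t - 1}"
      have sumk: "(\<Sum>j\<in>J. kk j) \<le> n"
      proof -
        have "(\<Sum>j<t - 1. card {s\<in>{..<n}. js ! j < s \<and> s \<le> js ! Suc j}) \<le> card {..<n}"
          by (rule gaps_sum) (use js_strict in auto)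
        moreover have "card {s\<in>{..<n}. js ! j < s \<and> s \<le> js ! Suc j} = kk j" if "j \<in> J" for j
        proof -
          have "Suc j < t" using that unfolding J_def by auto
          then have "js ! Suc j < n" by (rule js_lt(1))
          then have "{s\<in>{..<n}. js ! j < s \<and> s \<le> js ! Suc j} = {js ! j<..js ! Suc j}" by auto
          then show ?thesis unfolding kk_def by simp
        qed
        ultimately show ?thesis unfolding J_def by simp
      qed
      have suml: "(\<Sum>j\<in>J. ll j) \<le> m"
        unfolding J_def ll_def m_def by (rule gaps_sum[OF fB]) (use c_strict in auto)
      define bK where "bK = {j\<in>J. K < real (kk j)}"
      define bL where "bL = {j\<in>J. L < real (ll j)}"
      have fJ: "finite J" unfolding J_def by simp
      have bK: "real (card bK) * 4 \<le> \<tau>"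
      proof -
        have "real (card bK) * K = (\<Sum>j\<in>bK. K)" by simp
        also have "\<dots> \<le> (\<Sum>j\<in>bK. real (kk j))" by (rule sum_mono) (auto simp: bK_def)
        also have "\<dots> \<le> (\<Sum>j\<in>J. real (kk j))" by (rule sum_mono2[OF fJ]) (auto simp: bK_def)
        also have "\<dots> \<le> real n" using sumk by (simp flip: of_nat_sum)
        finally have "real (card bK) * (4 * real n / \<tau>) \<le> real n" unfolding K_def .
        then have "real (card bK) * 4 * real n \<le> \<tau> * real n" using tpos by (simp add: field_simps)
        then show ?thesis using npos tpos by simp
      qed
      have bL: "real (card bL) * 4 \<le> \<tau>"
      proof -
        have "real (card bL) * L = (\<Sum>j\<in>bL. L)" by simp
        also have "\<dots> \<le> (\<Sum>j\<in>bL. real (ll j))" by (rule sum_mono) (auto simp: bL_def)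
        also have "\<dots> \<le> (\<Sum>j\<in>J. real (ll j))" by (rule sum_mono2[OF fJ]) (auto simp: bL_def)
        also have "\<dots> \<le> real m" using suml by (simp flip: of_nat_sum)
        finally have "real (card bL) * (4 * real m / \<tau>) \<le> real m" unfolding L_def .
        then have "real (card bL) * 4 * real m \<le> \<tau> * real m" using tpos by (simp add: field_simps)
        then show ?thesis using mpos tpos by simp
      qed
      define good where "good = J - (bK \<union> bL)"
      have "card J - card (bK \<union> bL) \<le> card good"
        unfolding good_def by (rule diff_card_le_card_Diff) (auto simp: bK_def bL_def fJ)
      moreover have "card (bK \<union> bL) \<le> card bK + card bL" by (rule card_Un_le)
      moreover have "card J = t - 1" unfolding J_def by simp
      ultimately have "real t - 1 - real (card bK) - real (card bL) \<le> real (card good)" by linarith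
      then have goodb: "\<tau> / 4 \<le> real (card good)" using bK bL tt t4 by linarith
      define g where "g j = (js ! j, kk j, ll j)" for j
      have injg: "inj_on g good"
      proof (rule inj_onI)
        fix i j assume "i \<in> good" "j \<in> good" "g i = g j"
        then have "js ! i = js ! j" "i < t" "j < t" unfolding g_def good_def J_def by auto
        then have "\<not> i < j" "\<not> j < i" using js_strict[of i j] js_strict[of j i] by auto
        then show "i = j" by simp
      qed
      have img: "g ` good \<subseteq> Gx x"
      proof
        fix z assume "z \<in> g ` good"
        then obtain j where j: "j \<in> good" "z = g j" by auto
        then have jJ: "Suc j < t" "real (kk j) \<le> K" "real (ll j) \<le> L"
          unfolding good_def J_def bK_def bL_def by auto
        have a1: "js ! j < js ! Suc j" using js_strict[of j "Suc j"] jJ by simp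
        then have a2: "js ! j + kk j = js ! Suc j" unfolding kk_def by simp
        have a3: "js ! j < n" "js ! Suc j < n" "xs ! (js ! j) - x \<in> B" "xs ! (js ! Suc j) - x \<in> B"
          using js_lt[of j] js_lt[of "Suc j"] jJ by auto
        have a4: "ll j = card {b\<in>B. xs ! (js ! j) - x < b \<and> b \<le> xs ! (js ! j + kk j) - x}"
          unfolding ll_def c_def a2 ..
        have "c (Suc j) \<in> {b\<in>B. c j < b \<and> b \<le> c (Suc j)}" using c_strict[of j "Suc j"] jJ a3
          unfolding c_def by simp
        moreover have "finite {b\<in>B. c j < b \<and> b \<le> c (Suc j)}" using fB by simp
        ultimately have a5: "1 \<le> ll j" unfolding ll_def
          by (metis One_nat_def Suc_leI card_gt_0_iff empty_iff)
        have a6: "1 \<le> kk j" using a1 unfolding kk_def by simp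
        show "z \<in> Gx x" unfolding j(2) g_def Gx_def
          using a2 a3 a4 a5 a6 jJ by simp
      qed
      have "card good \<le> card (Gx x)" by (rule card_inj_on_le[OF injg img fGx])
      then show ?thesis using goodb by linarith
    qed
    have "real (card X) * (\<tau> / 4) \<le> real (card G)"
    proof -
      have "real (card X) * (\<tau> / 4) = (\<Sum>x\<in>X. \<tau> / 4)" by simp
      also have "\<dots> \<le> (\<Sum>x\<in>X. real (card (Gx x)))" by (rule sum_mono) (use lower in auto)
      also have "\<dots> = real (card G)" unfolding cardG by simp
      finally show ?thesis .
    qed
    then have "real (card X) * (\<tau> / 4) \<le> real m * K * L" using upper by linarith
    moreover have "real m * K * L = 16 * real n * real m * real m / \<tau>^2"
      unfolding K_def L_def by (simp add: field_simps power2_eq_square)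
    ultimately have "real (card X) * (\<tau> / 4) \<le> 16 * real n * real m * real m / \<tau>^2"
      by linarith
    then have "real (card X) * (\<tau> / 4) * \<tau>^2 \<le> 16 * real n * real m * real m"
      using tpos by (simp add: field_simps)
    moreover have "real (card X) * \<tau>^3 = 4 * (real (card X) * (\<tau> / 4) * \<tau>^2)"
      by (simp add: power2_eq_square power3_eq_cube)
    moreover have "64 * real n * (real m)^2 = 4 * (16 * real n * real m * real m)"
      by (simp add: power2_eq_square)
    ultimately have "real (card X) * \<tau>^3 \<le> 64 * real n * (real m)^2"
      by linarith
    then show ?thesis unfolding X_def n_def m_def by simp
  qed
qed

lemma r_le:
  assumes "finite A" "finite B"
  shows "r_minus A B x \<le> card A"
  unfolding r_minus_idx[OF assms] by (rule order.trans[OF card_mono[of "{..<card A}"]]) auto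

lemma r_set_eq: "{(a, b). a \<in> A \<and> b \<in> B \<and> a - b = x} = {z \<in> A \<times> B. (\<lambda>(a, b). a - b) z = x}"
  by auto

lemma r_sum:
  assumes "finite A" "finite B"
  shows "(\<Sum>x\<in>(\<lambda>(a, b). a - b) ` (A \<times> B). r_minus A B x) = card A * card B"
proof -
  have "card (A \<times> B) = (\<Sum>z\<in>A \<times> B. 1)" by simp
  also have "\<dots> = (\<Sum>y\<in>(\<lambda>(a, b). a - b) ` (A \<times> B). \<Sum>z\<in>{z \<in> A \<times> B. (\<lambda>(a, b). a - b) z = y}. 1)"
    by (rule sum.image_gen) (use assms in simp)
  also have "\<dots> = (\<Sum>y\<in>(\<lambda>(a, b). a - b) ` (A \<times> B). r_minus A B y)"
    unfolding r_minus_def r_set_eq by simp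
  finally show ?thesis by (simp add: card_cartesian_product)
qed

lemma r_pos_in:
  assumes "r_minus A B x \<noteq> 0"
  shows "x \<in> (\<lambda>(a, b). a - b) ` (A \<times> B)"
proof -
  have "{(a, b). a \<in> A \<and> b \<in> B \<and> a - b = x} \<noteq> {}" using assms unfolding r_minus_def by (intro notI) simp
  then obtain a b where "a \<in> A" "b \<in> B" "a - b = x" by auto
  then show ?thesis by force
qed

lemma level_all:
  assumes cA: "convex_set A" and fB: "finite B" and Bne: "B \<noteq> {}" and tp: "\<tau> > 0"
  shows "real (card {x. \<tau> \<le> real (r_minus A B x)}) * \<tau>^3 \<le> 64 * card A * (card B)^2"
proof (cases "4 \<le> \<tau>")
  case True then show ?thesis using level_bound_big[OF cA fB] by simp
next
  case False
  have fA: "finite A" using cA unfolding convex_set_def by simp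
  have sub: "{x. \<tau> \<le> real (r_minus A B x)} \<subseteq> (\<lambda>(a, b). a - b) ` (A \<times> B)"
  proof
    fix x assume "x \<in> {x. \<tau> \<le> real (r_minus A B x)}"
    then have "r_minus A B x \<noteq> 0" using tp by auto
    then show "x \<in> (\<lambda>(a, b). a - b) ` (A \<times> B)" by (rule r_pos_in)
  qed
  have "card {x. \<tau> \<le> real (r_minus A B x)} \<le> card ((\<lambda>(a, b). a - b) ` (A \<times> B))"
    by (rule card_mono[OF _ sub]) (use fA fB in simp)
  also have "\<dots> \<le> card (A \<times> B)" by (rule card_image_le) (use fA fB in simp)
  finally have c: "real (card {x. \<tau> \<le> real (r_minus A B x)}) \<le> real (card A) * real (card B)"
    by (simp add: card_cartesian_product flip: of_nat_mult)
  have m1: "real (card B) \<ge> 1" using fB Bne by (simp add: Suc_leI card_gt_0_iff)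
  have "\<tau>^3 \<le> 4^3" using False tp by (intro power_mono) auto
  then have t3: "\<tau>^3 \<le> 64" by simp
  have "real (card {x. \<tau> \<le> real (r_minus A B x)}) * \<tau>^3 \<le> (real (card A) * real (card B)) * 64"
    using c t3 tp by (intro mult_mono) auto
  also have "\<dots> \<le> real (card A) * real (card B) * 64 * real (card B)"
    using mult_left_mono[OF m1, of "real (card A) * real (card B) * 64"] by simp
  finally show ?thesis by (simp add: power2_eq_square algebra_simps)
qed

lemma level_triv:
  assumes fA: "finite A" and fB: "finite B" and s: "1 \<le> s"
  shows "real s * real (card {x\<in>(\<lambda>(a, b). a - b) ` (A \<times> B). s \<le> r_minus A B x}) \<le> real (card A) * real (card B)"
proof -
  define D where "D = (\<lambda>(a, b). a - b) ` (A \<times> B)"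
  have fD: "finite D" unfolding D_def using fA fB by simp
  have "real s * real (card {x\<in>D. s \<le> r_minus A B x}) = (\<Sum>x\<in>{x\<in>D. s \<le> r_minus A B x}. real s)" by simp
  also have "\<dots> \<le> (\<Sum>x\<in>{x\<in>D. s \<le> r_minus A B x}. real (r_minus A B x))" by (rule sum_mono) auto
  also have "\<dots> \<le> (\<Sum>x\<in>D. real (r_minus A B x))" by (rule sum_mono2[OF fD]) auto
  also have "\<dots> = real (card A) * real (card B)" unfolding D_def
    using r_sum[OF fA fB] by (simp flip: of_nat_sum of_nat_mult)
  finally show ?thesis unfolding D_def .
qed

lemma level_D:
  assumes "1 \<le> s"
  shows "{x\<in>(\<lambda>(a, b). a - b) ` (A \<times> B). s \<le> r_minus A B x} = {x. real s \<le> real (r_minus A B x)}"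
  using assms r_pos_in[of A B] by force

lemma ln2_ge: "1/2 \<le> ln (2::real)"
proof -
  have "ln (1/2::real) \<le> 1/2 - 1" by (rule ln_le_minus_one) simp
  then show ?thesis by (simp add: ln_div)
qed

lemma E3_minus:
  assumes cA: "convex_set A" and A2: "card A \<ge> 2" and fB: "finite B"
  shows "E_minus 3 A B \<le> 576 * card A * (card B)^2 * ln (card A)"
proof -
  have fA: "finite A" using cA unfolding convex_set_def by simp
  define n where "n = card A"
  define m where "m = card B"
  define D where "D = (\<lambda>(a, b). a - b) ` (A \<times> B)"
  have fD: "finite D" unfolding D_def using fA fB by simp
  have lnn: "1/2 \<le> ln (real n)"
  proof -
    have "ln 2 \<le> ln (real n)" using A2 unfolding n_def by simp
    then show ?thesis using ln2_ge by linarith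
  qed
  show ?thesis
  proof (cases "B = {}")
    case True then show ?thesis unfolding E_minus_def by simp
  next
    case False
    define N where "N s = card {x\<in>D. s \<le> r_minus A B x}" for s
    have E: "E_minus 3 A B = (\<Sum>s\<in>{1..n}. (real s powr 3 - real (s - 1) powr 3) * real (N s))"
      unfolding E_minus_def N_def D_def[symmetric]
      by (rule layer_cake[OF fD]) (use r_le[OF fA fB] in \<open>auto simp: n_def\<close>)
    have tm: "(real s powr 3 - real (s - 1) powr 3) * real (N s) \<le> 192 * real n * real m ^ 2 * (1 / real s)"
      if "s \<in> {1..n}" for s
    proof -
      have s1: "1 \<le> s" using that by simp
      have w: "real s powr 3 - real (s - 1) powr 3 \<le> 3 * real s ^ 2"
        using pw_bound[of 3 s] s1 by simp
      have lv: "real (N s) * real s ^ 3 \<le> 64 * real n * real m ^ 2"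
        using level_all[OF cA fB False, of "real s"] s1 level_D[OF s1, of A B]
        unfolding N_def D_def n_def m_def by simp
      have "(real s powr 3 - real (s - 1) powr 3) * real (N s) \<le> 3 * real s ^ 2 * real (N s)"
        using w by (intro mult_right_mono) auto
      also have "\<dots> = 3 * (real (N s) * real s ^ 3) / real s"
        using s1 by (simp add: power2_eq_square power3_eq_cube)
      also have "\<dots> \<le> 3 * (64 * real n * real m ^ 2) / real s"
        using lv s1 by (intro divide_right_mono) auto
      finally show ?thesis by simp
    qed
    have "E_minus 3 A B \<le> (\<Sum>s\<in>{1..n}. 192 * real n * real m ^ 2 * (1 / real s))"
      unfolding E by (rule sum_mono) (rule tm)
    also have "\<dots> = 192 * real n * real m ^ 2 * (\<Sum>s\<in>{1..n}. 1 / real s)"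
      by (simp add: sum_distrib_left)
    also have "\<dots> \<le> 192 * real n * real m ^ 2 * (1 + ln (real n))"
      by (rule mult_left_mono[OF harm_bound]) simp
    also have "\<dots> \<le> 192 * real n * real m ^ 2 * (3 * ln (real n))"
      using lnn by (intro mult_left_mono) auto
    finally show ?thesis unfolding n_def m_def by simp
  qed
qed

lemma Ep_minus:
  assumes cA: "convex_set A" and fB: "finite B" and p1: "1 < p" and p2: "p < 2"
  shows "E_minus (1 + p) A B \<le> 3 * (1 + 128 / (2 - p)) * card A * real (card B) powr (1 + p / 2)"
proof -
  have fA: "finite A" using cA unfolding convex_set_def by simp
  define n where "n = card A"
  define m where "m = card B"
  define D where "D = (\<lambda>(a, b). a - b) ` (A \<times> B)"
  have fD: "finite D" unfolding D_def using fA fB by simp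
  define q where "q = 1 + p"
  define a where "a = 2 - p"
  have ap: "0 < a" "a < 1" using p1 p2 unfolding a_def by auto
  show ?thesis
  proof (cases "B = {}")
    case True then show ?thesis unfolding E_minus_def by simp
  next
    case False
    define M where "M = real m"
    have M1: "1 \<le> M" unfolding M_def m_def using fB False by (simp add: Suc_leI card_gt_0_iff)
    define S where "S = nat \<lfloor>sqrt M\<rfloor>"
    have sq1: "1 \<le> sqrt M" using M1 by simp
    have S1: "1 \<le> S" unfolding S_def using sq1 by (simp add: le_nat_floor)
    have Sle: "real S \<le> sqrt M" unfolding S_def using sq1 by simp
    have Sge: "sqrt M / 2 \<le> real S"
    proof -
      have "sqrt M - 1 < real S" unfolding S_def using sq1 by linarith
      then show ?thesis using sq1 S1 by linarith
    qed
    define N where "N s = card {x\<in>D. s \<le> r_minus A B x}" for s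
    define g where "g y = real (max y S) powr (- a)" for y
    have E: "E_minus q A B = (\<Sum>s\<in>{1..n}. (real s powr q - real (s - 1) powr q) * real (N s))"
      unfolding E_minus_def N_def D_def[symmetric]
      by (rule layer_cake[OF fD]) (use r_le[OF fA fB] p1 in \<open>auto simp: n_def q_def\<close>)
    have gmono: "g s \<le> g (s - 1)" for s
      unfolding g_def by (rule powr_mono2') (use ap S1 in auto)
    have tm: "(real s powr q - real (s - 1) powr q) * real (N s)
       \<le> q * real n * M * real S powr (p - 1) * (if s \<le> S then 1 else 0)
         + q * 64 * real n * M^2 / a * (g (s - 1) - g s)"
      if "s \<in> {1..n}" for s
    proof -
      have s1: "1 \<le> s" using that by simp
      have w: "real s powr q - real (s - 1) powr q \<le> q * real s powr p"
        using pw_bound[of q s] s1 p1 unfolding q_def by simp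
      have T1: "(real s powr q - real (s - 1) powr q) * real (N s) \<le> q * real s powr p * real (N s)"
        using w by (intro mult_right_mono) auto
      have gnn: "0 \<le> g (s - 1) - g s" using gmono[of s] by simp
      show ?thesis
      proof (cases "s \<le> S")
        case True
        have tr: "real s * real (N s) \<le> real n * M"
          using level_triv[OF fA fB s1] unfolding N_def D_def n_def M_def m_def by simp
        have "real s powr p = real s powr (p - 1) * real s"
          using powr_add[of "real s" "p - 1" 1] by simp
        then have "q * real s powr p * real (N s) = q * real s powr (p - 1) * (real s * real (N s))" by simp
        also have "\<dots> \<le> q * real S powr (p - 1) * (real n * M)"
        proof (rule mult_mono)
          show "q * real s powr (p - 1) \<le> q * real S powr (p - 1)"
            using True s1 p1 unfolding q_def by (intro mult_left_mono powr_mono2) auto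
        qed (use tr p1 q_def in auto)
        finally have "(real s powr q - real (s - 1) powr q) * real (N s) \<le> q * real n * M * real S powr (p - 1)"
          using T1 by (simp add: algebra_simps)
        moreover have "0 \<le> q * 64 * real n * M^2 / a * (g (s - 1) - g s)"
          using gnn ap p1 unfolding q_def by simp
        ultimately show ?thesis using True by simp
      next
        case False
        have s2: "2 \<le> s" using False S1 by simp
        have lv: "real (N s) * real s ^ 3 \<le> 64 * real n * M ^ 2"
          using level_all[OF cA fB \<open>B \<noteq> {}\<close>, of "real s"] s1 level_D[OF s1, of A B]
          unfolding N_def D_def n_def M_def m_def by simp
        have sp: "0 < real s" using s1 by simp
        have "real s powr p * real (N s) = real s powr (p - 3) * (real (N s) * real s ^ 3)"
        proof -
          have "real s powr p = real s powr (p - 3) * real s powr 3" using powr_add[of "real s" "p - 3" 3] by simp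
          then show ?thesis using sp by simp
        qed
        also have "\<dots> \<le> real s powr (p - 3) * (64 * real n * M ^ 2)"
          using lv by (intro mult_left_mono) auto
        finally have T2: "real s powr p * real (N s) \<le> real s powr (p - 3) * (64 * real n * M ^ 2)" .
        have tb: "a * real s powr (- a - 1) \<le> real (s - 1) powr (- a) - real s powr (- a)"
          using tail_bound[of a "real (s - 1)"] ap s2 by (simp add: of_nat_diff)
        have gg: "g (s - 1) - g s = real (s - 1) powr (- a) - real s powr (- a)"
        proof -
          have "max (s - 1) S = s - 1" "max s S = s" using False by auto
          then show ?thesis unfolding g_def by simp
        qed
        have ex: "- a - 1 = p - 3" unfolding a_def by simp
        have "real s powr (p - 3) \<le> (g (s - 1) - g s) / a"
          using tb gg ap ex by (simp add: field_simps)
        then have "real s powr (p - 3) * (64 * real n * M ^ 2) \<le> (g (s - 1) - g s) / a * (64 * real n * M ^ 2)"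
          by (intro mult_right_mono) (auto simp: M_def)
        then have "q * (real s powr p * real (N s)) \<le> q * ((g (s - 1) - g s) / a * (64 * real n * M ^ 2))"
          using T2 p1 unfolding q_def by (intro mult_left_mono) auto
        then have "(real s powr q - real (s - 1) powr q) * real (N s) \<le> q * 64 * real n * M^2 / a * (g (s - 1) - g s)"
          using T1 by (simp add: algebra_simps)
        then show ?thesis using False by simp
      qed
    qed
    have "E_minus (1 + p) A B \<le> (\<Sum>s\<in>{1..n}. q * real n * M * real S powr (p - 1) * (if s \<le> S then 1 else 0)
         + q * 64 * real n * M^2 / a * (g (s - 1) - g s))"
      unfolding q_def[symmetric] E by (rule sum_mono) (rule tm)
    also have "\<dots> = q * real n * M * real S powr (p - 1) * real (card {s\<in>{1..n}. s \<le> S})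
         + q * 64 * real n * M^2 / a * (\<Sum>s\<in>{1..n}. g (s - 1) - g s)"
    proof -
      have h1: "(\<Sum>s\<in>{1..n}. (if s \<le> S then 1 else 0::real)) = real (card {s\<in>{1..n}. s \<le> S})"
        using sum.inter_filter[of "{1..n}" "\<lambda>_. 1::real" "\<lambda>s. s \<le> S"] by simp
      show ?thesis by (simp only: sum.distrib flip: sum_distrib_left) (simp only: h1)
    qed
    finally have E1: "E_minus (1 + p) A B \<le> q * real n * M * real S powr (p - 1) * real (card {s\<in>{1..n}. s \<le> S})
         + q * 64 * real n * M^2 / a * (\<Sum>s\<in>{1..n}. g (s - 1) - g s)" .
    have cS: "card {s\<in>{1..n}. s \<le> S} \<le> S"
    proof -
      have "{s\<in>{1..n}. s \<le> S} \<subseteq> {1..S}" by auto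
      then have "card {s\<in>{1..n}. s \<le> S} \<le> card {1..S}" by (intro card_mono) auto
      then show ?thesis by simp
    qed
    have tel: "(\<Sum>s\<in>{1..n}. g (s - 1) - g s) = g 0 - g n"
      using sum_telescope''[of 0 n "\<lambda>k. - g k"] by simp
    have g0: "g 0 = real S powr (- a)" unfolding g_def by simp
    have gn: "0 \<le> g n" unfolding g_def by simp
    have c1: "q * real n * M * real S powr (p - 1) * real (card {s\<in>{1..n}. s \<le> S})
        \<le> q * real n * M * real S powr (p - 1) * real S"
      using cS p1 M1 unfolding q_def by (intro mult_left_mono) auto
    have Sp: "real S powr (p - 1) * real S = real S powr p"
      using powr_add[of "real S" "p - 1" 1] by simp
    have Sp2: "real S powr p \<le> M powr (p / 2)"
    proof -
      have "real S powr p \<le> sqrt M powr p" using Sle S1 p1 by (intro powr_mono2) auto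
      also have "sqrt M powr p = M powr (p / 2)"
        using M1 by (simp add: powr_half_sqrt[symmetric] powr_powr)
      finally show ?thesis .
    qed
    have Sa: "real S powr (- a) \<le> 2 * M powr (- a / 2)"
    proof -
      have "real S powr (- a) \<le> (sqrt M / 2) powr (- a)" using Sge sq1 ap by (intro powr_mono2') auto
      also have "(sqrt M / 2) powr (- a) = M powr (- a / 2) * 2 powr a"
        using M1 by (simp add: powr_divide powr_half_sqrt[symmetric] powr_powr powr_minus field_simps)
      also have "\<dots> \<le> M powr (- a / 2) * 2"
      proof -
        have "(2::real) powr a \<le> 2 powr 1" using ap by (intro powr_mono) auto
        then show ?thesis by (intro mult_left_mono) auto
      qed
      finally show ?thesis by simp
    qed
    have id1: "M * M powr (p / 2) = M powr (1 + p / 2)"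
      using M1 by (simp add: powr_add powr_one)
    have id2: "M^2 * M powr (- a / 2) = M powr (1 + p / 2)"
    proof -
      have e: "(2::real) + - a / 2 = 1 + p / 2" unfolding a_def by (simp add: field_simps)
      have "M^2 * M powr (- a / 2) = M powr 2 * M powr (- a / 2)" using M1 by simp
      also have "\<dots> = M powr (2 + - a / 2)" by (rule powr_add[symmetric])
      also have "\<dots> = M powr (1 + p / 2)" by (simp only: e)
      finally show ?thesis .
    qed
    have qp: "0 \<le> q" "q \<le> 3" using p1 p2 unfolding q_def by auto
    have "E_minus (1 + p) A B \<le> q * real n * M * M powr (p / 2)
         + q * 64 * real n * M^2 / a * (2 * M powr (- a / 2))"
    proof -
      have "q * real n * M * real S powr (p - 1) * real S \<le> q * real n * M * M powr (p / 2)"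
        using Sp Sp2 qp M1 by (simp add: mult.assoc mult_left_mono)
      moreover have "q * 64 * real n * M^2 / a * (\<Sum>s\<in>{1..n}. g (s - 1) - g s)
          \<le> q * 64 * real n * M^2 / a * (2 * M powr (- a / 2))"
      proof (rule mult_left_mono)
        show "(\<Sum>s\<in>{1..n}. g (s - 1) - g s) \<le> 2 * M powr (- a / 2)" using tel g0 gn Sa by linarith
      qed (use qp ap in auto)
      ultimately show ?thesis using E1 c1 by linarith
    qed
    also have "\<dots> = q * real n * (M * M powr (p / 2)) + (q * 128 * real n / a) * (M^2 * M powr (- a / 2))"
      by (simp add: algebra_simps)
    also have "\<dots> = q * real n * M powr (1 + p / 2) + (q * 128 * real n / a) * M powr (1 + p / 2)"
      by (simp only: id1 id2)
    also have "\<dots> = q * (1 + 128 / a) * real n * M powr (1 + p / 2)"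
      by (simp add: algebra_simps)
    also have "\<dots> \<le> 3 * (1 + 128 / a) * real n * M powr (1 + p / 2)"
      using qp ap by (intro mult_right_mono) auto
    finally show ?thesis unfolding a_def n_def M_def m_def .
  qed
qed

lemma r_plus_eq: "r_plus A B x = r_minus A (uminus ` B) x"
proof -
  have "{(a, b). a \<in> A \<and> b \<in> uminus ` B \<and> a - b = x}
      = (\<lambda>(a, b). (a, - b)) ` {(a, b). a \<in> A \<and> b \<in> B \<and> a + b = x}"
  proof (rule set_eqI)
    fix z :: "real \<times> real"
    obtain a b where z: "z = (a, b)" by (cases z)
    show "z \<in> {(a, b). a \<in> A \<and> b \<in> uminus ` B \<and> a - b = x} \<longleftrightarrow>
        z \<in> (\<lambda>(a, b). (a, - b)) ` {(a, b). a \<in> A \<and> b \<in> B \<and> a + b = x}"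
    proof
      assume "z \<in> {(a, b). a \<in> A \<and> b \<in> uminus ` B \<and> a - b = x}"
      then have "a \<in> A" "- b \<in> B" "a + - b = x" unfolding z by auto
      then have "(a, - b) \<in> {(a, b). a \<in> A \<and> b \<in> B \<and> a + b = x}" by simp
      moreover have "z = (\<lambda>(a, b). (a, - b)) (a, - b)" unfolding z by simp
      ultimately show "z \<in> (\<lambda>(a, b). (a, - b)) ` {(a, b). a \<in> A \<and> b \<in> B \<and> a + b = x}"
        by (rule rev_image_eqI)
    next
      assume "z \<in> (\<lambda>(a, b). (a, - b)) ` {(a, b). a \<in> A \<and> b \<in> B \<and> a + b = x}"
      then obtain a' b' where "a' \<in> A" "b' \<in> B" "a' + b' = x" "z = (a', - b')" by auto
      then show "z \<in> {(a, b). a \<in> A \<and> b \<in> uminus ` B \<and> a - b = x}" by auto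
    qed
  qed
  moreover have "inj_on (\<lambda>(a, b). (a, - b)) {(a, b). a \<in> A \<and> b \<in> B \<and> a + b = (x::real)}"
    by (auto simp: inj_on_def)
  ultimately show ?thesis unfolding r_plus_def r_minus_def by (simp add: card_image)
qed

lemma E_plus_eq: "E_plus q A B = E_minus q A (uminus ` B)"
proof -
  have "(\<lambda>(a, b). a + b) ` (A \<times> B) = (\<lambda>(a, b). a - b) ` (A \<times> uminus ` B)"
    by (force simp: image_iff)
  then show ?thesis unfolding E_plus_def E_minus_def r_plus_eq by simp
qed

lemma card_neg: "card (uminus ` (B::real set)) = card B"
  by (rule card_image) (auto simp: inj_on_def)

lemma E3_plus:
  assumes cA: "convex_set A" and A2: "card A \<ge> 2" and fB: "finite B"
  shows "E_plus 3 A B \<le> 576 * card A * (card B)^2 * ln (card A)"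
  using E3_minus[OF cA A2, of "uminus ` B"] fB unfolding E_plus_eq card_neg by simp

lemma Ep_plus:
  assumes cA: "convex_set A" and fB: "finite B" and p1: "1 < p" and p2: "p < 2"
  shows "E_plus (1 + p) A B \<le> 3 * (1 + 128 / (2 - p)) * card A * real (card B) powr (1 + p / 2)"
  using Ep_minus[OF cA _ p1 p2, of "uminus ` B"] fB unfolding E_plus_eq card_neg by simp

theorem corollary3p1:
  shows "(\<exists>C::real>0. \<forall>A B. convex_set A \<and> card A \<ge> 2 \<and> finite B \<longrightarrow>
            E_plus 3 A B \<le> C * card A * (card B)^2 * ln (card A) \<and>
            E_minus 3 A B \<le> C * card A * (card B)^2 * ln (card A))
       \<and> (\<forall>p::real. 1 < p \<and> p < 2 \<longrightarrow>
           (\<exists>C::real>0. \<forall>A B. convex_set A \<and> finite B \<longrightarrow>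
              E_plus (1 + p) A B \<le> C * card A * real (card B) powr (1 + p / 2) \<and>
              E_minus (1 + p) A B \<le> C * card A * real (card B) powr (1 + p / 2)))"
proof (intro conjI allI impI)
  show "\<exists>C::real>0. \<forall>A B. convex_set A \<and> card A \<ge> 2 \<and> finite B \<longrightarrow>
            E_plus 3 A B \<le> C * card A * (card B)^2 * ln (card A) \<and>
            E_minus 3 A B \<le> C * card A * (card B)^2 * ln (card A)"
    apply (rule exI[of _ 576])
    apply (intro conjI allI impI)
      apply simp
    subgoal for A B using E3_plus[of A B] by simp
    subgoal for A B using E3_minus[of A B] by simp
    done
next
  fix p :: real assume p: "1 < p \<and> p < 2"
  then have "0 < 128 / (2 - p)" by simp
  then have pos: "0 < 3 * (1 + 128 / (2 - p))" by (intro mult_pos_pos) (simp, linarith)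
  show "\<exists>C::real>0. \<forall>A B. convex_set A \<and> finite B \<longrightarrow>
              E_plus (1 + p) A B \<le> C * card A * real (card B) powr (1 + p / 2) \<and>
              E_minus (1 + p) A B \<le> C * card A * real (card B) powr (1 + p / 2)"
    apply (intro exI[of _ "3 * (1 + 128 / (2 - p))"] conjI allI impI)
      apply (rule pos)
    subgoal for A B using Ep_plus[of A B p] p by simp
    subgoal for A B using Ep_minus[of A B p] p by simp
    done
qed

end
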